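(* For $k\in\mathbb N$ let $\mathcal H_k(e^q,J^-)=\frac1k\operatorname{tr}((J^-)^k)$ on $\mathfrak M_{0,-}^{\mathrm{reg}}$ (the restriction of $h_k=\frac1k\Re\operatorname{tr}(J^k)$). Then for every $\mathcal F\in C^\infty(\mathfrak M_{0,-}^{\mathrm{reg}})^{\mathbb T^n}$ and $k\in\mathbb N$, $$\{\mathcal F,\mathcal H_k\}_{2,-}^{\mathrm{red}}=\{\mathcal F,\mathcal H_{k+1}\}_{1,-}^{\mathrm{red}}=\langle\nabla_1\mathcal F,\mathcal V_k[q]\rangle+\langle d_2\mathcal F,\mathcal V_k[J^-]\rangle,$$ where $\mathcal V_k[q]\in\mathcal G_0^-$ has diagonal entries $((J^-)^k)_{jj}$ and $\mathcal V_k[J^-]=[R(q)(J^-)^k,J^-]$. Moreover, if one parametrizes $J^-$ as $(J^-)_{ij}=p_i\delta_{ij}-(1-\delta_{ij})\frac{\xi_{ij}}{\sinh(q_i-q_j)}$ with $p_i\in\mathbb R$ and $\xi$ an anti-Hermitian matrix with zero diagonal, then $$\mathcal H_2=\frac12\sum_{i=1}^np_i^2+\sum_{1\le i<j\le n}\frac{|\xi_{ij}|^2}{\sinh^2(q_i-q_j)},$$ and the functions $\tilde h_k=\frac1k\Im\operatorname{tr}(J^k)$ vanish identically on $\mathfrak M_{0,-}^{\mathrm{reg}}$.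
   Context: $\mathcal G=\mathfrak{gl}(n,\mathbb C)$ (real Lie algebra) with $\langle X,Y\rangle=\Re\operatorname{tr}(XY)$; $\mathcal G^+=\mathfrak u(n)$ (anti-Hermitian), $\mathcal G^-=\mathrm i\,\mathfrak u(n)$ (Hermitian), $X^\pm=\frac12(X\mp X^* )$, $\mathcal G^\pm_0$ the diagonal matrices in $\mathcal G^\pm$. $\mathfrak M_{0,-}^{\mathrm{reg}}=\{(e^q,J^-): J^-\in\mathcal G^-,\ q=\mathrm{diag}(q_1,\dots,q_n),\ q_i\in\mathbb R,\ q_1>\dots>q_n\}$, with the diagonal unitary torus $\mathbb T^n$ acting by $J^-\mapsto\tau J^-\tau^{-1}$. For $\mathcal F\in C^\infty(\mathfrak M_{0,-}^{\mathrm{reg}})$: $\nabla_1\mathcal F\in\mathcal G_0^-$ with $\langle\nabla_1\mathcal F,X_0\rangle=\frac{d}{dt}|_0\mathcal F(e^{q+tX_0},J^-)$ ($X_0\in\mathcal G_0^-$), $d_2\mathcal F\in\mathcal G^-$ with $\langle d_2\mathcal F,X\rangle=\frac{d}{dt}|_0\mathcal F(e^q,J^-+tX)$ ($X\in\mathcal G^-$), $\nabla_2\mathcal F=J^-d_2\mathcal F$. $R(q)\in\mathrm{End}(\mathcal G)$: $(R(q)X)_{ii}=0$, $(R(q)X)_{ij}=X_{ij}\coth(q_i-q_j)$ for $i\ne j$. The Poisson brackets on $C^\infty(\mathfrak M_{0,-}^{\mathrm{reg}})^{\mathbb T^n}$ are $\{\mathcal F,\mathcal H\}_{1,-}^{\mathrm{red}}=\langle\nabla_1\mathcal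 F,d_2\mathcal H\rangle-\langle\nabla_1\mathcal H,d_2\mathcal F\rangle+\langle J^-,[R(q)d_2\mathcal F,d_2\mathcal H]+[d_2\mathcal F,R(q)d_2\mathcal H]\rangle$ and $\{\mathcal F,\mathcal H\}_{2,-}^{\mathrm{red}}=\langle\nabla_1\mathcal F,\nabla_2\mathcal H\rangle-\langle\nabla_1\mathcal H,\nabla_2\mathcal F\rangle+2\langle\nabla_2\mathcal F,R(q)\nabla_2\mathcal H\rangle$ (derivatives at $(e^q,J^-)$). *)

theory Defs
  imports "HOL-Analysis.Analysis"
begin

text \<open>Matrices in gl(n,C) are modelled as complex^'n^'n with a finite, linearly ordered
  index type 'n (the ordering is used only for the chamber q_1 > ... > q_n).\<close>

type_synonym 'n cmat = "complex^('n::finite)^'n"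

primrec mpow :: "'a::comm_ring_1^'n^'n \<Rightarrow> nat \<Rightarrow> 'a^'n^'n" where
  "mpow A 0 = mat 1"
| "mpow A (Suc k) = A ** mpow A k"

definition cadj :: "('n::finite) cmat \<Rightarrow> 'n cmat" where
  "cadj A = (\<chi> i j. cnj (A $ j $ i))"

definition hermitian :: "('n::finite) cmat \<Rightarrow> bool" where
  "hermitian A \<longleftrightarrow> cadj A = A"

definition antihermitian :: "('n::finite) cmat \<Rightarrow> bool" where
  "antihermitian A \<longleftrightarrow> cadj A = - A"

definition ip :: "('n::finite) cmat \<Rightarrow> 'n cmat \<Rightarrow> real" where
  "ip X Y = Re (trace (X ** Y))"

definition comm :: "('n::finite) cmat \<Rightarrow> 'n cmat \<Rightarrow> 'n cmat" where
  "comm X Y = X ** Y - Y ** X"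

definition rdiag :: "real^('n::finite) \<Rightarrow> ('n::finite) cmat" where
  "rdiag x = (\<chi> i j. if i = j then complex_of_real (x $ i) else 0)"

definition coth :: "real \<Rightarrow> real" where
  "coth x = cosh x / sinh x"

definition Rmat :: "real^('n::finite) \<Rightarrow> ('n::finite) cmat \<Rightarrow> 'n cmat" where
  "Rmat q X = (\<chi> i j. if i = j then 0 else X $ i $ j * complex_of_real (coth (q $ i - q $ j)))"

definition regular :: "real^('n::{finite,linorder}) \<Rightarrow> bool" where
  "regular q \<longleftrightarrow> (\<forall>i j. i < j \<longrightarrow> q $ j < q $ i)"

text \<open>Points (e^q, J^-) of M_{0,-}^reg, parametrized by the vector q.\<close>
definition Mreg :: "((real^('n::{finite,linorder})) \<times> 'n cmat) set" where
  "Mreg = {(q, J). regular q \<and> hermitian J}"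

text \<open>Open ambient set {q regular} x gl(n,C); smooth functions on Mreg are exactly the
  restrictions of smooth functions on this open set (compose with J \<mapsto> (J+J^*)/2).\<close>
definition Mamb :: "((real^('n::{finite,linorder})) \<times> 'n cmat) set" where
  "Mamb = {(q, J). regular q}"

fun Ck_on :: "nat \<Rightarrow> 'a::real_normed_vector set \<Rightarrow> ('a \<Rightarrow> real) \<Rightarrow> bool" where
  "Ck_on 0 S f = continuous_on S f"
| "Ck_on (Suc k) S f = (continuous_on S f \<and> (\<forall>x\<in>S. f differentiable (at x)) \<and>
      (\<forall>v. Ck_on k S (\<lambda>x. frechet_derivative f (at x) v)))"

definition Cinf_on :: "'a::real_normed_vector set \<Rightarrow> ('a \<Rightarrow> real) \<Rightarrow> bool" where
  "Cinf_on S f \<longleftrightarrow> (\<forall>k. Ck_on k S f)"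

definition tor :: "real^('n::finite) \<Rightarrow> ('n::finite) cmat" where
  "tor \<theta> = (\<chi> i j. if i = j then cis (\<theta> $ i) else 0)"

definition torus_invariant :: "(real^('n::{finite,linorder}) \<Rightarrow> 'n cmat \<Rightarrow> real) \<Rightarrow> bool" where
  "torus_invariant F \<longleftrightarrow> (\<forall>q J \<theta>. (q, J) \<in> Mreg \<longrightarrow> F q (tor \<theta> ** J ** tor (- \<theta>)) = F q J)"

definition nabla1 :: "(real^('n::finite) \<Rightarrow> 'n cmat \<Rightarrow> real) \<Rightarrow> real^'n \<Rightarrow> 'n cmat \<Rightarrow> 'n cmat" where
  "nabla1 F q J = (THE G. (\<exists>g. G = rdiag g) \<and>
     (\<forall>x. ((\<lambda>t. F (q + t *\<^sub>R x) J) has_real_derivative ip G (rdiag x)) (at 0)))"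

definition d2 :: "(real^('n::finite) \<Rightarrow> 'n cmat \<Rightarrow> real) \<Rightarrow> real^'n \<Rightarrow> 'n cmat \<Rightarrow> 'n cmat" where
  "d2 F q J = (THE D. hermitian D \<and>
     (\<forall>X. hermitian X \<longrightarrow> ((\<lambda>t. F q (J + t *\<^sub>R X)) has_real_derivative ip D X) (at 0)))"

definition nabla2 :: "(real^('n::finite) \<Rightarrow> 'n cmat \<Rightarrow> real) \<Rightarrow> real^'n \<Rightarrow> 'n cmat \<Rightarrow> 'n cmat" where
  "nabla2 F q J = J ** d2 F q J"

definition br1 :: "(real^('n::finite) \<Rightarrow> 'n cmat \<Rightarrow> real) \<Rightarrow> (real^'n \<Rightarrow> 'n cmat \<Rightarrow> real) \<Rightarrow> real^'n \<Rightarrow> 'n cmat \<Rightarrow> real" where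
  "br1 F H q J = ip (nabla1 F q J) (d2 H q J) - ip (nabla1 H q J) (d2 F q J)
     + ip J (comm (Rmat q (d2 F q J)) (d2 H q J) + comm (d2 F q J) (Rmat q (d2 H q J)))"

definition br2 :: "(real^('n::finite) \<Rightarrow> 'n cmat \<Rightarrow> real) \<Rightarrow> (real^'n \<Rightarrow> 'n cmat \<Rightarrow> real) \<Rightarrow> real^'n \<Rightarrow> 'n cmat \<Rightarrow> real" where
  "br2 F H q J = ip (nabla1 F q J) (nabla2 H q J) - ip (nabla1 H q J) (nabla2 F q J)
     + 2 * ip (nabla2 F q J) (Rmat q (nabla2 H q J))"

text \<open>H_k(e^q,J^-) = (1/k) tr((J^-)^k) (real on Mreg; we take the real part).\<close>
definition Hk :: "nat \<Rightarrow> real^('n::finite) \<Rightarrow> ('n::finite) cmat \<Rightarrow> real" where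
  "Hk k q J = Re (trace (mpow J k)) / real k"

definition Vq :: "nat \<Rightarrow> ('n::finite) cmat \<Rightarrow> 'n cmat" where
  "Vq k J = (\<chi> i j. if i = j then mpow J k $ j $ j else 0)"

definition VJ :: "nat \<Rightarrow> real^('n::finite) \<Rightarrow> ('n::finite) cmat \<Rightarrow> 'n cmat" where
  "VJ k q J = comm (Rmat q (mpow J k)) J"

definition Jpar :: "real^('n::finite) \<Rightarrow> real^'n \<Rightarrow> ('n::finite) cmat \<Rightarrow> 'n cmat" where
  "Jpar q p \<xi> = (\<chi> i j. if i = j then complex_of_real (p $ i)
                   else - \<xi> $ i $ j / complex_of_real (sinh (q $ i - q $ j)))"

end

theory Submission
  imports Defs
begin


lemma mpow_add: "mpow J (a + b) = mpow J a ** mpow J b"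
  by (induction a) (simp_all add: matrix_mul_lid matrix_mul_assoc)

lemma mpow_Suc': "mpow J (Suc k) = mpow J k ** J"
  using mpow_add[of J k 1] by (simp add: matrix_mul_rid)

lemma mpow_comm: "J ** mpow J k = mpow J k ** J"
  by (metis mpow.simps(2) mpow_Suc')

lemma cadj_mult: "cadj (A ** B) = cadj B ** cadj A"
  by (simp add: cadj_def matrix_matrix_mult_def vec_eq_iff mult.commute)

lemma cadj_cadj: "cadj (cadj A) = A"
  by (simp add: cadj_def vec_eq_iff)

lemma cadj_mat1: "cadj (mat 1) = mat 1"
  by (simp add: cadj_def mat_def vec_eq_iff)

lemma cadj_diff: "cadj (A - B) = cadj A - cadj B"
  by (simp add: cadj_def vec_eq_iff)

lemma trace_cadj: "trace (cadj A) = cnj (trace A)"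
  by (simp add: cadj_def trace_def)

lemma herm_mpow: "hermitian J \<Longrightarrow> hermitian (mpow J k)"
  unfolding hermitian_def
  by (induction k) (simp_all add: cadj_mat1 cadj_mult mpow_comm)

lemma coth_swap: "coth (b - a) = - coth (a - b)"
proof -
  have "coth (b - a) = coth (- (a - b))" by simp
  thus ?thesis by (simp only: coth_def cosh_minus sinh_minus divide_minus_right)
qed

lemma Rmat_antiherm:
  assumes "hermitian A" shows "cadj (Rmat q A) = - Rmat q A"
proof -
  have a: "cnj (A $ j $ i) = A $ i $ j" for i j
  proof -
    have "cadj A $ i $ j = A $ i $ j" using assms unfolding hermitian_def by simp
    thus ?thesis by (simp add: cadj_def)
  qed
  have "cadj (Rmat q A) $ i $ j = (- Rmat q A) $ i $ j" for i j
  proof (cases "i = j")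
    case True thus ?thesis by (simp add: cadj_def Rmat_def)
  next
    case False
    have "cadj (Rmat q A) $ i $ j = cnj (A $ j $ i) * complex_of_real (coth (q $ j - q $ i))"
      using False by (simp add: cadj_def Rmat_def)
    also have "\<dots> = - (A $ i $ j * complex_of_real (coth (q $ i - q $ j)))"
      by (simp only: a coth_swap[where a="q $ i" and b="q $ j"] of_real_minus mult_minus_right)
    also have "\<dots> = (- Rmat q A) $ i $ j" using False by (simp add: Rmat_def)
    finally show ?thesis .
  qed
  thus ?thesis by (simp add: vec_eq_iff)
qed

lemma herm_diag_real: "hermitian A \<Longrightarrow> Im (A $ i $ i) = 0"
  unfolding hermitian_def cadj_def vec_eq_iff
  by (metis (no_types, lifting) cnj.simps(2) complex.sel(2) neg_equal_zero vec_lambda_beta)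

lemma part3: assumes "hermitian J" shows "Im (trace (mpow J k)) = 0"
  using assms by (simp add: trace_def herm_diag_real herm_mpow)

lemma matrix_sub_ldistrib: "(A::'a::comm_ring_1^'n::finite^'m) ** (B - C) = A ** B - A ** C"
  by (simp add: matrix_matrix_mult_def vec_eq_iff right_diff_distrib sum_subtractf)
lemma matrix_neg_left: "(- (A::'a::comm_ring_1^'n::finite^'m)) ** B = - (A ** B)"
  by (simp add: matrix_matrix_mult_def vec_eq_iff sum_negf)

lemma ip_add2: "ip X (Y + Z) = ip X Y + ip X Z"
  by (simp add: ip_def matrix_add_ldistrib trace_add)
lemma ip_diff2: "ip X (Y - Z) = ip X Y - ip X Z"
  by (simp add: ip_def matrix_sub_ldistrib trace_sub)
lemma ip_0: "ip 0 X = 0"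
  by (simp add: ip_def trace_def matrix_matrix_mult_def)
lemma ip_sym: "ip X Y = ip Y X"
  unfolding ip_def by (rule arg_cong[where f=Re, OF trace_mul_sym])

lemma trace_rdiag: "trace (rdiag g ** M) = (\<Sum>i\<in>UNIV. complex_of_real (g $ i) * M $ i $ i)"
  proof -
  have h: "\<And>P (a::complex) b. (if P then a else 0) * b = (if P then a * b else 0)" by simp
  show ?thesis by (simp add: trace_def rdiag_def matrix_matrix_mult_def h)
qed

lemma ip_Vq: "ip (rdiag g) (mpow J k) = ip (rdiag g) (Vq k J)"
  by (simp add: ip_def trace_rdiag Vq_def)

lemma trace_cyc3: "trace ((A::'a::comm_semiring_1^'n::finite^'n) ** B ** C) = trace (B ** C ** A)"
proof -
  have "trace (A ** B ** C) = trace (A ** (B ** C))" by (simp add: matrix_mul_assoc)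
  also have "\<dots> = trace ((B ** C) ** A)" by (rule trace_mul_sym)
  finally show ?thesis .
qed

lemma trace_neg: "trace (- (M::'a::comm_ring_1^'n::finite^'n)) = - trace M"
  by (simp add: trace_def sum_negf)

lemma Re_tr_swap: 
  assumes "hermitian J" "hermitian D" "hermitian A"
  shows "Re (trace (D ** J ** Rmat q A)) = - Re (trace (J ** D ** Rmat q A))"
proof -
  have "cadj (J ** D ** Rmat q A) = - (Rmat q A ** D ** J)"
    using assms by (simp add: cadj_mult Rmat_antiherm hermitian_def matrix_mul_assoc matrix_neg_left)
  hence "cnj (trace (J ** D ** Rmat q A)) = - trace (Rmat q A ** D ** J)"
    by (simp add: trace_cadj[symmetric] trace_neg)
  also have "trace (Rmat q A ** D ** J) = trace (D ** J ** Rmat q A)"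
    by (rule trace_cyc3)
  finally have "trace (D ** J ** Rmat q A) = - cnj (trace (J ** D ** Rmat q A))" by (metis minus_minus)
  hence "Re (trace (D ** J ** Rmat q A)) = Re (- cnj (trace (J ** D ** Rmat q A)))" by (rule arg_cong)
  thus ?thesis by (simp only: uminus_complex.sel cnj.sel)
qed

lemma br_alg:
  assumes J: "hermitian J" and D: "hermitian D"
  shows "ip (rdiag g) (J ** mpow J k) - ip 0 (J ** D) + 2 * ip (J ** D) (Rmat q (J ** mpow J k))
       = ip (rdiag g) (mpow J (Suc k)) - ip 0 D + ip J (comm (Rmat q D) (mpow J (Suc k)) + comm D (Rmat q (mpow J (Suc k))))"
    and "ip (rdiag g) (mpow J (Suc k)) - ip 0 D + ip J (comm (Rmat q D) (mpow J (Suc k)) + comm D (Rmat q (mpow J (Suc k))))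
       = ip (rdiag g) (Vq (Suc k) J) + ip D (VJ (Suc k) q J)"
proof -
  define A where "A = mpow J (Suc k)"
  have hA: "hermitian A" using herm_mpow[OF J, of "Suc k"] by (simp only: A_def)
  have JA: "J ** A = A ** J" unfolding A_def by (rule mpow_comm)
  have c1: "ip J (comm (Rmat q D) A) = 0"
  proof -
    have "trace (J ** (A ** Rmat q D)) = trace ((J ** A) ** Rmat q D)" by (simp only: matrix_mul_assoc)
    also have "\<dots> = trace (Rmat q D ** (J ** A))" by (rule trace_mul_sym)
    also have "\<dots> = trace ((Rmat q D ** A) ** J)" by (simp only: JA matrix_mul_assoc)
    also have "\<dots> = trace (J ** (Rmat q D ** A))" by (rule trace_mul_sym)
    finally have "trace (J ** (Rmat q D ** A)) = trace (J ** (A ** Rmat q D))" by (rule sym)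
    thus ?thesis by (simp add: ip_def comm_def matrix_sub_ldistrib trace_sub)
  qed
  have c2: "ip J (comm D (Rmat q A)) = Re (trace (J ** D ** Rmat q A)) - Re (trace (D ** J ** Rmat q A))"
  proof -
    have "trace (J ** (Rmat q A ** D)) = trace ((Rmat q A ** D) ** J)" by (rule trace_mul_sym)
    also have "\<dots> = trace (D ** J ** Rmat q A)" by (rule trace_cyc3)
    finally have "trace (J ** (Rmat q A ** D)) = trace (D ** J ** Rmat q A)" .
    thus ?thesis by (simp add: ip_def comm_def matrix_sub_ldistrib trace_sub matrix_mul_assoc)
  qed
  have c3: "ip D (VJ (Suc k) q J) = Re (trace (J ** D ** Rmat q A)) - Re (trace (D ** J ** Rmat q A))"
  proof -
    have "trace (D ** (Rmat q A ** J)) = trace (D ** Rmat q A ** J)" by (simp only: matrix_mul_assoc)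
    also have "\<dots> = trace (Rmat q A ** J ** D)" by (rule trace_cyc3)
    also have "\<dots> = trace (J ** D ** Rmat q A)" by (rule trace_cyc3)
    finally have "trace (D ** (Rmat q A ** J)) = trace (J ** D ** Rmat q A)" .
    thus ?thesis unfolding VJ_def A_def[symmetric] by (simp add: ip_def comm_def matrix_sub_ldistrib trace_sub matrix_mul_assoc)
  qed
  have sw: "Re (trace (D ** J ** Rmat q A)) = - Re (trace (J ** D ** Rmat q A))"
    using Re_tr_swap[OF J D hA] .
  show "ip (rdiag g) (J ** mpow J k) - ip 0 (J ** D) + 2 * ip (J ** D) (Rmat q (J ** mpow J k))
       = ip (rdiag g) (mpow J (Suc k)) - ip 0 D + ip J (comm (Rmat q D) (mpow J (Suc k)) + comm D (Rmat q (mpow J (Suc k))))"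
  proof -
    have e: "J ** mpow J k = A" by (simp add: A_def)
    have f: "ip (J ** D) (Rmat q A) = Re (trace (J ** D ** Rmat q A))" by (simp add: ip_def)
    show ?thesis unfolding e A_def[symmetric] using c1 c2 sw f by (simp add: ip_0 ip_add2)
  qed
  show "ip (rdiag g) (mpow J (Suc k)) - ip 0 D + ip J (comm (Rmat q D) (mpow J (Suc k)) + comm D (Rmat q (mpow J (Suc k))))
       = ip (rdiag g) (Vq (Suc k) J) + ip D (VJ (Suc k) q J)"
    using c1 c2 c3 ip_Vq[of g J "Suc k", folded A_def] unfolding A_def[symmetric] by (simp add: ip_0 ip_add2)
qed



lemma sum_pairs_split:
  fixes c :: "'n::{finite,linorder} \<Rightarrow> 'n \<Rightarrow> real"
  assumes sym: "\<And>i j. c i j = c j i" and d: "\<And>i. c i i = 0"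
  shows "(\<Sum>i\<in>UNIV. \<Sum>j\<in>UNIV. c i j) = 2 * (\<Sum>(i, j)\<in>{(i, j). i < j}. c i j)"
proof -
  have "(\<Sum>i\<in>UNIV. \<Sum>j\<in>UNIV. c i j) = (\<Sum>(i,j)\<in>UNIV. c i j)"
    by (simp add: sum.cartesian_product)
  also have "UNIV = {(i, j). i < j} \<union> {(i,j). j < i} \<union> {(i,j::'n). i = j}" by auto
  also have "(\<Sum>(i,j)\<in>{(i, j). i < j} \<union> {(i,j). j < i} \<union> {(i,j::'n). i = j}. c i j)
     = (\<Sum>(i,j)\<in>{(i, j). i < j}. c i j) + (\<Sum>(i,j)\<in>{(i,j). j < i}. c i j) + (\<Sum>(i,j)\<in>{(i,j::'n). i = j}. c i j)"
  proof -
    have f: "finite (A :: ('n \<times> 'n) set)" for A by simp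
    have d1: "({(i, j). i < j} \<union> {(i,j). j < i}) \<inter> {(i,j::'n). i = j} = {}" by auto
    have d2: "{(i, j). i < j} \<inter> {(i,j::'n). j < i} = {}" by auto
    show ?thesis by (simp only: sum.union_disjoint[OF f f d1] sum.union_disjoint[OF f f d2])
  qed
  also have "(\<Sum>(i,j)\<in>{(i,j::'n). i = j}. c i j) = 0"
    by (rule sum.neutral) (auto simp: d)
  also have "(\<Sum>(i,j)\<in>{(i,j). j < i}. c i j) = (\<Sum>(i,j)\<in>{(i, j). i < j}. c i j)"
  proof (rule sum.reindex_bij_witness[where i="\<lambda>(i,j). (j,i)" and j="\<lambda>(i,j). (j,i)"])
  qed (auto intro: sym)
  finally show ?thesis by simp
qed

lemma part2:
  fixes q p :: "real^'n::{finite,linorder}" and \<xi> :: "'n cmat"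
  assumes ah: "antihermitian \<xi>" and d: "\<forall>i. \<xi> $ i $ i = 0"
  shows "Hk 2 q (Jpar q p \<xi>) =
              (1/2) * (\<Sum>i\<in>UNIV. (p $ i)\<^sup>2)
              + (\<Sum>(i, j)\<in>{(i, j). i < j}. (cmod (\<xi> $ i $ j))\<^sup>2 / (sinh (q $ i - q $ j))\<^sup>2)"
proof -
  define J where "J = Jpar q p \<xi>"
  define c where "c i j = (cmod (\<xi> $ i $ j))\<^sup>2 / (sinh (q $ i - q $ j))\<^sup>2" for i j
  have xs: "\<xi> $ j $ i = - cnj (\<xi> $ i $ j)" for i j
  proof -
    have "cadj \<xi> $ i $ j = (- \<xi>) $ i $ j" using ah unfolding antihermitian_def by simp
    hence "cnj (\<xi> $ j $ i) = - \<xi> $ i $ j" by (simp add: cadj_def)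
    hence "cnj (cnj (\<xi> $ j $ i)) = cnj (- \<xi> $ i $ j)" by (rule arg_cong)
    thus ?thesis by simp
  qed
  have t: "Re (J $ i $ j * J $ j $ i) = (if i = j then (p $ i)\<^sup>2 else 0) + c i j" for i j
  proof (cases "i = j")
    case True thus ?thesis using d by (simp add: J_def Jpar_def c_def power2_eq_square)
  next
    case False
    have s: "sinh (q $ j - q $ i) = - sinh (q $ i - q $ j)"
      by (metis minus_diff_eq sinh_minus)
    have "J $ i $ j * J $ j $ i = (\<xi> $ i $ j * cnj (\<xi> $ i $ j)) / complex_of_real ((sinh (q $ i - q $ j))\<^sup>2)"
      using False by (simp add: J_def Jpar_def xs[of i j] s power2_eq_square)
    also have "\<xi> $ i $ j * cnj (\<xi> $ i $ j) = complex_of_real ((cmod (\<xi> $ i $ j))\<^sup>2)"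
      by (rule complex_norm_square[symmetric])
    finally show ?thesis using False by (simp add: c_def Re_divide_of_real)
  qed
  have "mpow J 2 = J ** J" by (simp add: numeral_2_eq_2 matrix_mul_rid)
  hence tr: "Re (trace (mpow J 2)) = (\<Sum>i\<in>UNIV. \<Sum>j\<in>UNIV. Re (J $ i $ j * J $ j $ i))"
    by (simp add: trace_def matrix_matrix_mult_def)
  have "(\<Sum>i\<in>UNIV. \<Sum>j\<in>UNIV. Re (J $ i $ j * J $ j $ i))
     = (\<Sum>i\<in>UNIV. (p $ i)\<^sup>2) + (\<Sum>i\<in>UNIV. \<Sum>j\<in>UNIV. c i j)"
    unfolding t by (simp add: sum.distrib)
  also have "(\<Sum>i\<in>UNIV. \<Sum>j\<in>UNIV. c i j) = 2 * (\<Sum>(i, j)\<in>{(i, j). i < j}. c i j)"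
  proof (rule sum_pairs_split)
    fix i j
    have "cmod (\<xi> $ j $ i) = cmod (\<xi> $ i $ j)" by (simp add: xs[of i j])
    moreover have "(sinh (q $ j - q $ i))\<^sup>2 = (sinh (q $ i - q $ j))\<^sup>2"
      by (metis minus_diff_eq sinh_minus power2_minus)
    ultimately show "c i j = c j i" by (simp add: c_def)
  next
    fix i show "c i i = 0" by (simp add: c_def d)
  qed
  finally show ?thesis unfolding J_def[symmetric] Hk_def tr c_def by simp
qed



primrec dP :: "'n::finite cmat \<Rightarrow> 'n cmat \<Rightarrow> nat \<Rightarrow> 'n cmat" where
  "dP J X 0 = 0"
| "dP J X (Suc n) = X ** mpow J n + J ** dP J X n"

lemma mpow_deriv:
  "((\<lambda>t. mpow (J + t *\<^sub>R X) n $ i $ j) has_vector_derivative dP J X n $ i $ j) (at 0)"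
proof (induction n arbitrary: i j)
  case 0 thus ?case by simp
next
  case (Suc n)
  have e: "(\<lambda>t. mpow (J + t *\<^sub>R X) (Suc n) $ i $ j) =
     (\<lambda>t. \<Sum>l\<in>UNIV. (J $ i $ l + t *\<^sub>R X $ i $ l) * mpow (J + t *\<^sub>R X) n $ l $ j)"
    by (simp add: matrix_matrix_mult_def)
  have l: "((\<lambda>t. J $ i $ l + t *\<^sub>R X $ i $ l) has_vector_derivative X $ i $ l) (at 0)" for l
    by (auto intro!: derivative_eq_intros)
  have "((\<lambda>t. \<Sum>l\<in>UNIV. (J $ i $ l + t *\<^sub>R X $ i $ l) * mpow (J + t *\<^sub>R X) n $ l $ j)
     has_vector_derivative (\<Sum>l\<in>UNIV. (J $ i $ l + 0 *\<^sub>R X $ i $ l) * dP J X n $ l $ j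
        + X $ i $ l * mpow (J + 0 *\<^sub>R X) n $ l $ j)) (at 0)"
    by (intro has_vector_derivative_sum has_vector_derivative_mult l Suc.IH)
  also have "(\<Sum>l\<in>UNIV. (J $ i $ l + 0 *\<^sub>R X $ i $ l) * dP J X n $ l $ j
        + X $ i $ l * mpow (J + 0 *\<^sub>R X) n $ l $ j) = dP J X (Suc n) $ i $ j"
    by (simp add: matrix_matrix_mult_def sum.distrib add.commute)
  finally show ?case unfolding e .
qed

lemma trace_dP: "trace (B ** dP J X n) = (\<Sum>m<n. trace (B ** mpow J m ** X ** mpow J (n - 1 - m)))"
proof (induction n arbitrary: B)
  case 0 thus ?case by (simp add: trace_def matrix_matrix_mult_def)
next
  case (Suc n)
  have "trace (B ** dP J X (Suc n)) = trace (B ** X ** mpow J n) + trace ((B ** J) ** dP J X n)"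
    by (simp add: matrix_add_ldistrib trace_add matrix_mul_assoc)
  also have "trace ((B ** J) ** dP J X n) = (\<Sum>m<n. trace (B ** mpow J (Suc m) ** X ** mpow J (n - 1 - m)))"
    by (simp add: Suc.IH matrix_mul_assoc)
  finally show ?case by (subst sum.lessThan_Suc_shift) (simp add: matrix_mul_rid matrix_mul_assoc)
qed

lemma trace_dP': "trace (dP J X (Suc k)) = of_nat (Suc k) * trace (mpow J k ** X)"
proof -
  have "trace (dP J X (Suc k)) = trace (mat 1 ** dP J X (Suc k))" by simp
  also have "\<dots> = (\<Sum>m<Suc k. trace (mpow J m ** X ** mpow J (k - m)))"
    unfolding trace_dP by simp
  also have "\<dots> = (\<Sum>m<Suc k. trace (mpow J k ** X))"
  proof (rule sum.cong[OF refl])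
    fix m assume "m \<in> {..<Suc k}"
    hence "k - m + m = k" by simp
    hence "mpow J (k - m) ** mpow J m = mpow J k" by (metis mpow_add)
    have "trace (mpow J m ** X ** mpow J (k - m)) = trace (X ** mpow J (k - m) ** mpow J m)"
      by (rule trace_cyc3)
    also have "\<dots> = trace (X ** mpow J k)" by (simp only: matrix_mul_assoc[symmetric] \<open>mpow J (k - m) ** mpow J m = mpow J k\<close>)
    also have "\<dots> = trace (mpow J k ** X)" by (rule trace_mul_sym)
    finally show "trace (mpow J m ** X ** mpow J (k - m)) = trace (mpow J k ** X)" .
  qed
  finally show ?thesis by simp
qed

lemma Hk_deriv:
  "((\<lambda>t. Hk (Suc k) q (J + t *\<^sub>R X)) has_real_derivative ip (mpow J k) X) (at 0)"
proof -
  have "((\<lambda>t. \<Sum>i\<in>UNIV. mpow (J + t *\<^sub>R X) (Suc k) $ i $ i) has_vector_derivative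
      (\<Sum>i\<in>UNIV. dP J X (Suc k) $ i $ i)) (at 0)"
    by (intro has_vector_derivative_sum mpow_deriv)
  hence "((\<lambda>t. Re (\<Sum>i\<in>UNIV. mpow (J + t *\<^sub>R X) (Suc k) $ i $ i)) has_vector_derivative
      Re (\<Sum>i\<in>UNIV. dP J X (Suc k) $ i $ i)) (at 0)"
    by (rule bounded_linear.has_vector_derivative[OF bounded_linear_Re])
  hence "((\<lambda>t. Re (trace (mpow (J + t *\<^sub>R X) (Suc k)))) has_real_derivative
      Re (trace (dP J X (Suc k)))) (at 0)"
    by (simp add: has_real_derivative_iff_has_vector_derivative trace_def)
  hence "((\<lambda>t. Re (trace (mpow (J + t *\<^sub>R X) (Suc k))) / real (Suc k)) has_real_derivative
      Re (trace (dP J X (Suc k))) / real (Suc k)) (at 0)"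
    by (rule DERIV_cdivide)
  moreover have "Re (trace (dP J X (Suc k))) / real (Suc k) = ip (mpow J k) X"
    unfolding trace_dP' ip_def by (simp del: of_nat_Suc)
  ultimately show ?thesis unfolding Hk_def by simp
qed



lemma herm_diff: "hermitian A \<Longrightarrow> hermitian B \<Longrightarrow> hermitian (A - B)"
  by (simp add: hermitian_def cadj_diff)

lemma ip_diff1: "ip (X - Y) Z = ip X Z - ip Y Z"
  by (metis ip_diff2 ip_sym)

lemma ip_self_herm:
  assumes "hermitian E"
  shows "ip E E = (\<Sum>i\<in>UNIV. \<Sum>j\<in>UNIV. (cmod (E $ i $ j))\<^sup>2)"
proof -
  have c: "E $ j $ i = cnj (E $ i $ j)" for i j
    using assms unfolding hermitian_def cadj_def vec_eq_iff by (metis vec_lambda_beta)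
  have "E $ i $ j * E $ j $ i = complex_of_real ((cmod (E $ i $ j))\<^sup>2)" for i j
    unfolding c[of j i] by (rule complex_norm_square[symmetric])
  thus ?thesis by (simp add: ip_def trace_def matrix_matrix_mult_def)
qed

lemma herm_ip_zero:
  assumes "hermitian E" "ip E E = 0" shows "E = 0"
proof -
  have s: "(\<Sum>i\<in>UNIV. \<Sum>j\<in>UNIV. (cmod (E $ i $ j))\<^sup>2) = 0"
    using ip_self_herm[OF assms(1), symmetric] assms(2) by simp
  have z: "(cmod (E $ i $ j))\<^sup>2 = 0" for i j
  proof -
    have a: "(\<Sum>j\<in>UNIV. (cmod (E $ i $ j))\<^sup>2) = 0"
      using sum_nonneg_eq_0_iff[of UNIV "\<lambda>i. \<Sum>j\<in>UNIV. (cmod (E $ i $ j))\<^sup>2"] s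
      by (simp add: sum_nonneg)
    show ?thesis
      using sum_nonneg_eq_0_iff[of UNIV "\<lambda>j. (cmod (E $ i $ j))\<^sup>2"] a by simp
  qed
  show ?thesis using z by (simp add: vec_eq_iff)
qed

lemma d2_eq:
  assumes hD: "hermitian D"
    and dv: "\<And>X. hermitian X \<Longrightarrow> ((\<lambda>t. F q (J + t *\<^sub>R X)) has_real_derivative ip D X) (at 0)"
  shows "d2 F q J = D"
  unfolding d2_def
proof (rule the_equality)
  show "hermitian D \<and> (\<forall>X. hermitian X \<longrightarrow> ((\<lambda>t. F q (J + t *\<^sub>R X)) has_real_derivative ip D X) (at 0))"
    using hD dv by blast
next
  fix D' assume a: "hermitian D' \<and> (\<forall>X. hermitian X \<longrightarrow> ((\<lambda>t. F q (J + t *\<^sub>R X)) has_real_derivative ip D' X) (at 0))"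
  have e: "ip D' X = ip D X" if "hermitian X" for X
    using a dv[OF that] that DERIV_unique by blast
  have h: "hermitian (D' - D)" using a hD herm_diff by blast
  have "ip (D' - D) (D' - D) = 0" using e[OF h] by (simp add: ip_diff1)
  thus "D' = D" using herm_ip_zero[OF h] by simp
qed

lemma ip_rdiag: "ip (rdiag g) (rdiag x) = g \<bullet> x"
  by (simp add: ip_def trace_rdiag inner_vec_def) (simp add: rdiag_def)

lemma nabla1_eq:
  assumes dv: "\<And>x. ((\<lambda>t. F (q + t *\<^sub>R x) J) has_real_derivative g \<bullet> x) (at 0)"
  shows "nabla1 F q J = rdiag g"
  unfolding nabla1_def
proof (rule the_equality)
  show "(\<exists>g'. rdiag g = rdiag g') \<and> (\<forall>x. ((\<lambda>t. F (q + t *\<^sub>R x) J) has_real_derivative ip (rdiag g) (rdiag x)) (at 0))"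
    using dv by (auto simp: ip_rdiag)
next
  fix G assume a: "(\<exists>g'. G = rdiag g') \<and> (\<forall>x. ((\<lambda>t. F (q + t *\<^sub>R x) J) has_real_derivative ip G (rdiag x)) (at 0))"
  then obtain g' where G: "G = rdiag g'" by blast
  have e: "g' \<bullet> x = g \<bullet> x" for x
    using a dv[of x] DERIV_unique unfolding G ip_rdiag by blast
  have "(g' - g) \<bullet> (g' - g) = 0" using e[of "g' - g"] by (simp add: inner_diff_left)
  thus "G = rdiag g" using G by simp
qed

lemma riesz:
  fixes L :: "'a::euclidean_space \<Rightarrow> real"
  assumes "linear L"
  shows "L x = (\<Sum>b\<in>Basis. L b *\<^sub>R b) \<bullet> x"
proof -
  have "L x = L (\<Sum>b\<in>Basis. (x \<bullet> b) *\<^sub>R b)" by (simp add: euclidean_representation)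
  also have "\<dots> = (\<Sum>b\<in>Basis. (x \<bullet> b) * L b)"
    using assms by (simp add: linear_sum linear_scale)
  also have "\<dots> = (\<Sum>b\<in>Basis. L b *\<^sub>R b) \<bullet> x"
    by (simp add: inner_sum_left inner_commute[of x] mult.commute)
  finally show ?thesis .
qed



lemma inner_cmat: "(G::'n::finite cmat) \<bullet> X = (\<Sum>i\<in>UNIV. \<Sum>k\<in>UNIV. Re (cnj (G $ i $ k) * X $ i $ k))"
  by (simp add: inner_vec_def inner_complex_def)

lemma riesz_herm:
  fixes G :: "'n::finite cmat"
  defines "D \<equiv> \<chi> i k. (cnj (G $ k $ i) + G $ i $ k) / 2"
  shows "hermitian D" and "hermitian X \<Longrightarrow> ip D X = G \<bullet> X"
proof -
  show "hermitian D" by (simp add: D_def hermitian_def cadj_def vec_eq_iff add.commute)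
  assume hX: "hermitian X"
  have c: "X $ k $ i = cnj (X $ i $ k)" for i k
    using hX unfolding hermitian_def cadj_def vec_eq_iff by (metis vec_lambda_beta)
  have r: "Re (a * cnj b) = Re (cnj a * b)" for a b :: complex by simp
  have "ip D X = (\<Sum>i\<in>UNIV. \<Sum>k\<in>UNIV. Re (D $ i $ k * X $ k $ i))"
    by (simp add: ip_def trace_def matrix_matrix_mult_def)
  also have "\<dots> = (\<Sum>i\<in>UNIV. \<Sum>k\<in>UNIV. Re (cnj (G $ k $ i) * X $ k $ i) / 2 + Re (cnj (G $ i $ k) * X $ i $ k) / 2)"
  proof (intro sum.cong refl)
    fix i k
    show "Re (D $ i $ k * X $ k $ i) = Re (cnj (G $ k $ i) * X $ k $ i) / 2 + Re (cnj (G $ i $ k) * X $ i $ k) / 2"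
      by (simp add: D_def c[of i k] distrib_right add_divide_distrib)
  qed
  also have "\<dots> = (\<Sum>i\<in>UNIV. \<Sum>k\<in>UNIV. Re (cnj (G $ k $ i) * X $ k $ i)) / 2 + (\<Sum>i\<in>UNIV. \<Sum>k\<in>UNIV. Re (cnj (G $ i $ k) * X $ i $ k)) / 2"
    by (simp only: sum.distrib sum_divide_distrib[symmetric])
  also have "(\<Sum>i\<in>UNIV. \<Sum>k\<in>UNIV. Re (cnj (G $ k $ i) * X $ k $ i)) = (\<Sum>i\<in>UNIV. \<Sum>k\<in>UNIV. Re (cnj (G $ i $ k) * X $ i $ k))"
    by (rule sum.swap)
  finally show "ip D X = G \<bullet> X" by (simp add: inner_cmat)
qed

lemma chain_dir:
  fixes f :: "'a::real_normed_vector \<Rightarrow> real"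
  assumes d: "(f has_derivative f') (at a)"
  shows "((\<lambda>t. f (a + t *\<^sub>R v)) has_real_derivative f' v) (at 0)"
proof -
  have l: "linear f'" using has_derivative_linear[OF d] .
  have i: "((\<lambda>t. a + t *\<^sub>R v) has_derivative (\<lambda>t. t *\<^sub>R v)) (at 0)"
    by (auto intro!: derivative_eq_intros)
  have "((\<lambda>t. f (a + t *\<^sub>R v)) has_derivative (\<lambda>t. f' (t *\<^sub>R v))) (at 0)"
    by (rule has_derivative_compose[OF i]) (simp add: d)
  moreover have "(\<lambda>t. f' (t *\<^sub>R v)) = (*) (f' v)"
    using l by (simp add: fun_eq_iff linear_scale)
  ultimately show ?thesis unfolding has_field_derivative_def by simp
qed

lemma F_grads:
  fixes F :: "(real, 'n::{finite,linorder}) vec \<Rightarrow> 'n cmat \<Rightarrow> real"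
  assumes smooth: "Cinf_on Mamb (\<lambda>(q, J). F q J)" and m: "(q, J) \<in> Mreg"
  shows "\<exists>g. nabla1 F q J = rdiag g" and "hermitian (d2 F q J)" 
proof -
  have "Ck_on (Suc 0) Mamb (\<lambda>(q, J). F q J)" using smooth Cinf_on_def by blast
  moreover have "(q, J) \<in> Mamb" using m by (simp add: Mreg_def Mamb_def)
  ultimately have "(\<lambda>(q, J). F q J) differentiable (at (q, J))" by simp
  then obtain f' where d: "((\<lambda>(q, J). F q J) has_derivative f') (at (q, J))"
    unfolding differentiable_def by blast
  have l: "linear f'" using has_derivative_linear[OF d] .
  have l1: "linear (\<lambda>x. f' (x, 0))"
  proof (rule linearI)
    fix x y show "f' (x + y, 0) = f' (x, 0) + f' (y, 0)"
      using linear_add[OF l, of "(x, 0)" "(y, 0)"] by simp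
  next
    fix c :: real and x show "f' (c *\<^sub>R x, 0) = c *\<^sub>R f' (x, 0)"
      using linear_scale[OF l, of c "(x, 0)"] by simp
  qed
  have l2: "linear (\<lambda>X. f' (0, X))"
  proof (rule linearI)
    fix x y show "f' (0, x + y) = f' (0, x) + f' (0, y)"
      using linear_add[OF l, of "(0, x)" "(0, y)"] by simp
  next
    fix c :: real and x show "f' (0, c *\<^sub>R x) = c *\<^sub>R f' (0, x)"
      using linear_scale[OF l, of c "(0, x)"] by simp
  qed
  define g where "g = (\<Sum>b\<in>Basis. f' (b, 0) *\<^sub>R b)"
  have "((\<lambda>t. F (q + t *\<^sub>R x) J) has_real_derivative g \<bullet> x) (at 0)" for x
  proof -
    have "((\<lambda>t. (\<lambda>(q, J). F q J) ((q, J) + t *\<^sub>R (x, 0))) has_real_derivative f' (x, 0)) (at 0)"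
      by (rule chain_dir[OF d])
    moreover have "f' (x, 0) = g \<bullet> x" unfolding g_def by (rule riesz[OF l1])
    ultimately show ?thesis by simp
  qed
  thus "\<exists>g. nabla1 F q J = rdiag g" using nabla1_eq by blast
  define G where "G = (\<Sum>b\<in>Basis. f' (0, b) *\<^sub>R b)"
  define D where "D = (\<chi> i k. (cnj (G $ k $ i) + G $ i $ k) / 2)"
  have "d2 F q J = D"
  proof (rule d2_eq)
    show "hermitian D" unfolding D_def by (rule riesz_herm)
    fix X :: "'n cmat" assume hX: "hermitian X"
    have "((\<lambda>t. (\<lambda>(q, J). F q J) ((q, J) + t *\<^sub>R (0, X))) has_real_derivative f' (0, X)) (at 0)"
      by (rule chain_dir[OF d])
    moreover have "f' (0, X) = ip D X"
    proof -
      have "f' (0, X) = G \<bullet> X" unfolding G_def by (rule riesz[OF l2])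
      also have "G \<bullet> X = ip D X" unfolding D_def by (rule riesz_herm(2)[OF hX, symmetric])
      finally show ?thesis .
    qed
    ultimately show "((\<lambda>t. F q (J + t *\<^sub>R X)) has_real_derivative ip D X) (at 0)" by simp
  qed
  thus "hermitian (d2 F q J)" unfolding D_def by (simp add: riesz_herm)
qed



lemma rdiag_0: "rdiag 0 = 0" by (simp add: rdiag_def vec_eq_iff)

lemma Hk_grads:
  assumes "hermitian J"
  shows "nabla1 (Hk (Suc k)) q J = 0" and "d2 (Hk (Suc k)) q J = mpow J k"
proof -
  have "nabla1 (Hk (Suc k)) q J = rdiag 0"
    by (rule nabla1_eq) (simp add: Hk_def)
  thus "nabla1 (Hk (Suc k)) q J = 0" by (simp add: rdiag_0)
  show "d2 (Hk (Suc k)) q J = mpow J k"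
    by (rule d2_eq) (auto simp: herm_mpow assms Hk_deriv)
qed

theorem corollary4p5:
  fixes F :: "(real, 'n::{finite,linorder}) vec \<Rightarrow> 'n cmat \<Rightarrow> real"
  assumes smooth: "Cinf_on Mamb (\<lambda>(q, J). F q J)"
    and inv: "torus_invariant F"
  shows "(\<forall>k q J. 1 \<le> k \<and> (q, J) \<in> Mreg \<longrightarrow>
            br2 F (Hk k) q J = br1 F (Hk (k + 1)) q J \<and>
            br1 F (Hk (k + 1)) q J = ip (nabla1 F q J) (Vq k J) + ip (d2 F q J) (VJ k q J))
       \<and> (\<forall>(q::(real,'n) vec) p \<xi>. regular q \<and> antihermitian \<xi> \<and> (\<forall>i. \<xi> $ i $ i = 0) \<longrightarrow>
            Hk 2 q (Jpar q p \<xi>) =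
              (1/2) * (\<Sum>i\<in>UNIV. (p $ i)\<^sup>2)
              + (\<Sum>(i, j)\<in>{(i, j). i < j}. (cmod (\<xi> $ i $ j))\<^sup>2 / (sinh (q $ i - q $ j))\<^sup>2))
       \<and> (\<forall>k (q::(real,'n) vec) J. 1 \<le> k \<and> (q, J) \<in> Mreg \<longrightarrow> Im (trace (mpow J k)) / real k = 0)"
proof (intro conjI allI impI)
  fix k :: nat and q J assume a: "1 \<le> k \<and> (q, J) \<in> (Mreg :: ((real, 'n) vec \<times> 'n cmat) set)"
  then obtain m where k: "k = Suc m" by (cases k) auto
  have hJ: "hermitian J" using a by (simp add: Mreg_def)
  obtain g where g: "nabla1 F q J = rdiag g" using F_grads(1)[OF smooth] a by blast
  have hD: "hermitian (d2 F q J)" using F_grads(2)[OF smooth] a by blast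
  note H1 = Hk_grads[OF hJ, of m q] and H2 = Hk_grads[OF hJ, of "Suc m" q]
  have e1: "br2 F (Hk k) q J = ip (rdiag g) (J ** mpow J m) - ip 0 (J ** d2 F q J)
      + 2 * ip (J ** d2 F q J) (Rmat q (J ** mpow J m))"
    unfolding br2_def nabla2_def k H1 g by simp
  have e2: "br1 F (Hk (k + 1)) q J = ip (rdiag g) (mpow J (Suc m)) - ip 0 (d2 F q J)
      + ip J (comm (Rmat q (d2 F q J)) (mpow J (Suc m)) + comm (d2 F q J) (Rmat q (mpow J (Suc m))))"
    unfolding br1_def k g using H2 by simp
  show "br2 F (Hk k) q J = br1 F (Hk (k + 1)) q J"
    unfolding e1 e2 by (rule br_alg(1)[OF hJ hD])
  show "br1 F (Hk (k + 1)) q J = ip (nabla1 F q J) (Vq k J) + ip (d2 F q J) (VJ k q J)"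
    unfolding e2 unfolding g k by (rule br_alg(2)[OF hJ hD])
next
  fix q :: "(real,'n) vec" and p :: "(real,'n) vec" and \<xi> :: "'n cmat"
  assume "regular q \<and> antihermitian \<xi> \<and> (\<forall>i. \<xi> $ i $ i = 0)"
  thus "Hk 2 q (Jpar q p \<xi>) =
              (1/2) * (\<Sum>i\<in>UNIV. (p $ i)\<^sup>2)
              + (\<Sum>(i, j)\<in>{(i, j). i < j}. (cmod (\<xi> $ i $ j))\<^sup>2 / (sinh (q $ i - q $ j))\<^sup>2)"
    using part2 by blast
next
  fix k :: nat and q :: "(real,'n) vec" and J assume "1 \<le> k \<and> (q, J) \<in> (Mreg :: ((real, 'n) vec \<times> 'n cmat) set)"
  hence "hermitian J" by (simp add: Mreg_def)
  thus "Im (trace (mpow J k)) / real k = 0" by (simp add: part3)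
qed


end
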